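(* Let $n\ge2$ and let $X_1,\ldots,X_n$ be independent and identically distributed random vectors in $\mathbb{R}^n$ such that $X_1,\ldots,X_{n-1}$ are linearly independent almost surely. Let $$Y=\frac{\wedge(X_1,\ldots,X_{n-1})}{\|\wedge(X_1,\ldots,X_{n-1})\|_\infty}.$$ Then $$\liminf_{\epsilon\to0^+}\frac{\mathbb{P}\big(|X_n\cdot Y|<\epsilon\big)}{\epsilon}>0\qquad\text{and}\qquad \mathbb{E}\left[\frac{1}{|X_n\cdot Y|}\right]=+\infty.$$
   Context: The generalized cross product $\wedge:(\mathbb{R}^n)^{n-1}\to\mathbb{R}^n$ is defined by the formal determinant $$\wedge(x_1,\ldots,x_{n-1})=\det\begin{bmatrix}\mathbf e_1&\cdots&\mathbf e_n\\ x_1(1)&\cdots&x_1(n)\\ \vdots&&\vdots\\ x_{n-1}(1)&\cdots&x_{n-1}(n)\end{bmatrix},$$ where $\mathbf e_i$ is the $i$-th canonical basis vector; it is orthogonal to $x_1,\ldots,x_{n-1}$ and is zero iff they are linearly dependent. $\|v\|_\infty=\max_i|v(i)|$ and $\cdot$ is the Euclidean inner product. *)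

theory Defs
  imports "HOL-Probability.Probability"
begin

text \<open>Vectors in R^n are represented as functions nat => real, meaningful on {..<n}
  (index i in the paper corresponds to i-1 here).\<close>

definition vdot :: "nat \<Rightarrow> (nat \<Rightarrow> real) \<Rightarrow> (nat \<Rightarrow> real) \<Rightarrow> real" where
  "vdot n x y = (\<Sum>j<n. x j * y j)"

definition supnorm :: "nat \<Rightarrow> (nat \<Rightarrow> real) \<Rightarrow> real" where
  "supnorm n v = Max ((\<lambda>j. \<bar>v j\<bar>) ` {..<n})"

text \<open>Generalized cross product of x 0, ..., x (n-2) in R^n: the formal determinant whose
  first row is (e_1,...,e_n) and whose row k+2 is x k; component j is the Leibniz expansion
  with e_j in the first row replaced by the indicator of column j.\<close>

definition gen_cross :: "nat \<Rightarrow> (nat \<Rightarrow> nat \<Rightarrow> real) \<Rightarrow> nat \<Rightarrow> real" where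
  "gen_cross n x = (\<lambda>j. if j < n then
      (\<Sum>p | p permutes {..<n}. of_int (sign p) *
          (\<Prod>i<n. (if i = 0 then (if p i = j then 1 else 0) else x (i - 1) (p i))))
    else 0)"

definition lin_indep_vecs :: "nat \<Rightarrow> nat \<Rightarrow> (nat \<Rightarrow> nat \<Rightarrow> real) \<Rightarrow> bool" where
  "lin_indep_vecs n m x \<longleftrightarrow>
     (\<forall>c::nat \<Rightarrow> real. (\<forall>j<n. (\<Sum>i<m. c i * x i j) = 0) \<longrightarrow> (\<forall>i<m. c i = 0))"

end

theory Submission
  imports Defs "Jordan_Normal_Form.Determinant"
begin

definition unitv :: "nat \<Rightarrow> nat \<Rightarrow> real" where
  "unitv c = (\<lambda>l. if l = c then 1 else 0)"

definition Dt :: "nat \<Rightarrow> (nat \<Rightarrow> nat \<Rightarrow> real) \<Rightarrow> real" where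
  "Dt n r = (\<Sum>p | p permutes {..<n}. of_int (sign p) * (\<Prod>i<n. r i (p i)))"

lemma Dt_det: "Dt n r = Determinant.det (mat n n (\<lambda>(i,j). r i j))"
  unfolding Dt_def Determinant.det_def
  by (auto simp: atLeast0LessThan intro!: sum.cong prod.cong dest: permutes_in_image)

lemma Dt_cong:
  assumes "\<And>i c. i<n \<Longrightarrow> c<n \<Longrightarrow> r i c = r' i c"
  shows "Dt n r = Dt n r'"
  unfolding Dt_def
proof (intro sum.cong prod.cong arg_cong2[where f="(*)"] refl)
  fix p i assume "p \<in> {p. p permutes {..<n}}" "i \<in> {..<n}"
  then have "p i < n" "i < n" using permutes_in_image[of p "{..<n}" i] by auto
  then show "r i (p i) = r' i (p i)" using assms by auto
qed

lemma Dt_rows_eq: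
  assumes "i<n" "j<n" "i\<noteq>j" "\<And>c. c<n \<Longrightarrow> r i c = r j c"
  shows "Dt n r = 0"
  unfolding Dt_det
  by (rule det_identical_rows[of _ n i j]) (use assms in \<open>auto intro!: eq_vecI\<close>)

lemma Dt_swap:
  assumes "i<n" "j<n" "i\<noteq>j"
  shows "Dt n (r(i := r j, j := r i)) = - Dt n r"
proof -
  have eq: "swaprows i j (mat n n (\<lambda>(a,b). r a b)) = mat n n (\<lambda>(a,b). (r(i := r j, j := r i)) a b)"
    using assms unfolding mat_swaprows_def by (auto intro!: eq_matI)
  have "Dt n (r(i := r j, j := r i)) = Determinant.det (swaprows i j (mat n n (\<lambda>(a,b). r a b)))"
    unfolding Dt_det by (simp only: eq)
  also have "\<dots> = - Dt n r" unfolding Dt_det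
    by (rule det_swaprows[OF assms]) auto
  finally show ?thesis .
qed

lemma Dt_lin:
  assumes "i<n"
  shows "Dt n (r(i:=v)) = (\<Sum>c<n. v c * Dt n (r(i := unitv c)))"
proof -
  have split: "\<And>w p. (\<Prod>k<n. (r(i:=w)) k (p k)) = w (p i) * (\<Prod>k\<in>{..<n}-{i}. r k (p k))"
    using assms by (subst prod.remove[of _ i]) (auto intro!: prod.cong)
  have "(\<Sum>c<n. v c * Dt n (r(i := unitv c)))
      = (\<Sum>c<n. \<Sum>p | p permutes {..<n}. v c * unitv c (p i) * (of_int (sign p) * (\<Prod>k\<in>{..<n}-{i}. r k (p k))))"
    unfolding Dt_def split by (simp add: sum_distrib_left algebra_simps)
  also have "\<dots> = (\<Sum>p | p permutes {..<n}. \<Sum>c<n. v c * unitv c (p i) * (of_int (sign p) * (\<Prod>k\<in>{..<n}-{i}. r k (p k))))"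
    by (rule sum.swap)
  also have "\<dots> = (\<Sum>p | p permutes {..<n}. v (p i) * (of_int (sign p) * (\<Prod>k\<in>{..<n}-{i}. r k (p k))))"
  proof (rule sum.cong[OF refl])
    fix p assume "p \<in> {p. p permutes {..<n}}"
    then have "p i < n" using assms by (auto dest: permutes_in_image)
    have e: "\<And>c. v c * unitv c (p i) = (if p i = c then v c else 0)" unfolding unitv_def by auto
    show "(\<Sum>c<n. v c * unitv c (p i) * (of_int (sign p) * (\<Prod>k\<in>{..<n}-{i}. r k (p k)))) =
          v (p i) * (of_int (sign p) * (\<Prod>k\<in>{..<n}-{i}. r k (p k)))"
      unfolding e sum_distrib_right[symmetric] using \<open>p i < n\<close> by simp
  qed
  also have "\<dots> = Dt n (r(i:=v))"
    unfolding Dt_def split by (simp add: algebra_simps)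
  finally show ?thesis by simp
qed

lemma linear_vanish:
  assumes van: "\<And>i. i<n \<Longrightarrow> (\<Sum>l<n. R i l * G l) = 0"
  shows "Dt n R * (\<Sum>l<n. v l * G l) = 0"
proof -
  define M where "M = mat n n (\<lambda>(i,c). R i c)"
  have Mc: "M \<in> carrier_mat n n" unfolding M_def by auto
  define B where "B = adj_mat M"
  have Bc: "B \<in> carrier_mat n n" and BM: "B * M = Determinant.det M \<cdot>\<^sub>m 1\<^sub>m n"
    using adj_mat[OF Mc] unfolding B_def by auto
  have dM: "Determinant.det M = Dt n R" unfolding M_def Dt_det by simp
  have entry: "(\<Sum>i<n. B $$ (c,i) * R i l) = (if c = l then Dt n R else 0)" if "c<n" "l<n" for c l
  proof -
    have "(B * M) $$ (c,l) = (\<Sum>i<n. B $$ (c,i) * R i l)"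
      using Bc that unfolding M_def
      by (auto simp: scalar_prod_def atLeast0LessThan intro!: sum.cong)
    moreover have "(B * M) $$ (c,l) = (if c = l then Dt n R else 0)"
      using that BM dM by simp
    ultimately show ?thesis by simp
  qed
  have e1: "(\<Sum>c<n. v c * (if c = l then Dt n R else 0)) = v l * Dt n R" if "l < n" for l
  proof -
    have "(\<Sum>c<n. v c * (if c = l then Dt n R else 0)) = (\<Sum>c<n. (if c = l then v c * Dt n R else 0))"
      by (rule sum.cong) auto
    also have "\<dots> = v l * Dt n R" using that by (simp add: sum.delta')
    finally show ?thesis .
  qed
  have "Dt n R * (\<Sum>l<n. v l * G l) = (\<Sum>l<n. (\<Sum>c<n. v c * (if c = l then Dt n R else 0)) * G l)"
    by (simp add: e1 sum_distrib_left mult.commute mult.left_commute)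
  also have "\<dots> = (\<Sum>l<n. (\<Sum>c<n. v c * (\<Sum>i<n. B $$ (c,i) * R i l)) * G l)"
    by (intro sum.cong refl arg_cong2[where f="(*)"]) (simp add: entry)
  also have "\<dots> = (\<Sum>l<n. \<Sum>c<n. \<Sum>i<n. (v c * B $$ (c,i)) * (R i l * G l))"
    by (simp add: sum_distrib_left sum_distrib_right algebra_simps)
  also have "\<dots> = (\<Sum>c<n. \<Sum>l<n. \<Sum>i<n. (v c * B $$ (c,i)) * (R i l * G l))"
    by (rule sum.swap)
  also have "\<dots> = (\<Sum>c<n. \<Sum>i<n. \<Sum>l<n. (v c * B $$ (c,i)) * (R i l * G l))"
    by (rule sum.cong[OF refl], rule sum.swap)
  also have "\<dots> = (\<Sum>c<n. \<Sum>i<n. (v c * B $$ (c,i)) * (\<Sum>l<n. R i l * G l))"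
    by (simp add: sum_distrib_left)
  also have "\<dots> = 0" by (simp add: van)
  finally show ?thesis .
qed

definition rw :: "(nat \<Rightarrow> nat \<Rightarrow> real) \<Rightarrow> (nat \<Rightarrow> real) \<Rightarrow> (nat \<Rightarrow> real) \<Rightarrow> nat \<Rightarrow> nat \<Rightarrow> real" where
  "rw A r0 r1 = (\<lambda>i. if i = 0 then r0 else if i = 1 then r1 else A i)"

lemma rw_upd0: "(rw A r0 r1)(0 := w) = rw A w r1"
  unfolding rw_def by auto

lemma Dt_lin0: "0 < n \<Longrightarrow> Dt n (rw A w r1) = (\<Sum>c<n. w c * Dt n (rw A (unitv c) r1))"
  using Dt_lin[of 0 n "rw A w r1" w] by (simp only: rw_upd0)

lemma rw_upd1: "(rw A r0 r1)(1 := w) = rw A r0 w"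
  unfolding rw_def by auto

lemma Dt_lin1: "1 < n \<Longrightarrow> Dt n (rw A r0 w) = (\<Sum>c<n. w c * Dt n (rw A r0 (unitv c)))"
  using Dt_lin[of 1 n "rw A r0 w" w] by (simp only: rw_upd1)

lemma Dt_rw_same: "1 < n \<Longrightarrow> Dt n (rw A w w) = 0"
  by (rule Dt_rows_eq[of 0 n 1]) (auto simp: rw_def)

lemma Dt_rw_swap: "1 < n \<Longrightarrow> Dt n (rw A w y) = - Dt n (rw A y w)"
proof -
  assume n: "1 < n"
  have "(rw A y w)(0 := rw A y w 1, 1 := rw A y w 0) = rw A w y"
    unfolding rw_def by auto
  then show ?thesis using Dt_swap[of 0 n 1 "rw A y w"] n by simp
qed

lemma Dt_rw_A: "1 < i \<Longrightarrow> i < n \<Longrightarrow> Dt n (rw A (A i) y) = 0"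
  by (rule Dt_rows_eq[of 0 n i]) (auto simp: rw_def)

lemma plucker:
  fixes A :: "nat \<Rightarrow> nat \<Rightarrow> real" and u v :: "nat \<Rightarrow> real"
  assumes n: "2 \<le> n" and jk: "j < n" "k < n"
  defines "m \<equiv> Dt n (rw A (unitv j) (unitv k))"
    and "a \<equiv> Dt n (rw A (unitv j) u)" and "b \<equiv> Dt n (rw A (unitv k) u)"
    and "a' \<equiv> Dt n (rw A (unitv j) v)" and "b' \<equiv> Dt n (rw A (unitv k) v)"
  shows "m * (m * Dt n (rw A v u) + a * b' - b * a') = 0"
proof -
  define g where "g = (\<lambda>w. m * Dt n (rw A w u) - a * Dt n (rw A w (unitv k)) + b * Dt n (rw A w (unitv j)))"
  define G where "G = (\<lambda>l. g (unitv l))"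
  have glin: "g w = (\<Sum>l<n. w l * G l)" for w
  proof -
    have n0: "0 < n" using n by simp
    note l1 = Dt_lin0[OF n0, of A w u] and l2 = Dt_lin0[OF n0, of A w "unitv k"]
      and l3 = Dt_lin0[OF n0, of A w "unitv j"]
    show ?thesis unfolding g_def G_def l1 l2 l3
      by (simp add: sum_distrib_left sum_subtractf sum.distrib algebra_simps)
  qed
  define R where "R = rw A (unitv j) (unitv k)"
  have van: "(\<Sum>l<n. R i l * G l) = 0" if "i < n" for i
  proof -
    have "(\<Sum>l<n. R i l * G l) = g (R i)" by (simp add: glin)
    also have "\<dots> = 0"
    proof (cases "i = 0")
      case True
      then show ?thesis using n unfolding g_def R_def a_def m_def
        by (simp add: rw_def[of A "unitv j" "unitv k"] Dt_rw_same)
    next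
      case False
      show ?thesis
      proof (cases "i = 1")
        case True
        have "Dt n (rw A (unitv k) (unitv j)) = - m" unfolding m_def using n Dt_rw_swap[of n A "unitv k" "unitv j"] by simp
        then show ?thesis using n True unfolding g_def R_def b_def
          by (simp add: rw_def[of A "unitv j" "unitv k"] Dt_rw_same)
      next
        case False
        then have "R i = A i" "1 < i" using \<open>i \<noteq> 0\<close> unfolding R_def rw_def by auto
        then show ?thesis unfolding g_def using Dt_rw_A that by simp
      qed
    qed
    finally show ?thesis .
  qed
  have "Dt n R * (\<Sum>l<n. v l * G l) = 0" by (rule linear_vanish[OF van])
  moreover have "Dt n R = m" unfolding R_def m_def ..
  moreover have "g v = m * Dt n (rw A v u) + a * b' - b * a'"
    unfolding g_def a'_def b'_def using n Dt_rw_swap[of n A v "unitv j"] Dt_rw_swap[of n A v "unitv k"] by simp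
  ultimately show ?thesis by (simp add: glin)
qed

lemma gc_Dt: "j < n \<Longrightarrow> gen_cross n x j = Dt n (rw (\<lambda>i. x (i-1)) (unitv j) (x 0))"
  unfolding gen_cross_def Dt_def rw_def unitv_def
  by (auto intro!: sum.cong prod.cong)

lemma vdot_gc: "0 < n \<Longrightarrow> vdot n v (gen_cross n x) = Dt n (rw (\<lambda>i. x (i-1)) v (x 0))"
  unfolding vdot_def using Dt_lin0[of n "\<lambda>i. x (i-1)" v "x 0"]
  by (simp add: gc_Dt)

lemma supnorm_ge: "j < n \<Longrightarrow> \<bar>g j\<bar> \<le> supnorm n g"
  unfolding supnorm_def by (rule Max_ge) auto

definition chart :: "real \<Rightarrow> real \<Rightarrow> real" where
  "chart a b = (if \<bar>b\<bar> \<le> \<bar>a\<bar> then 0 else 1)"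
definition tv :: "real \<Rightarrow> real \<Rightarrow> real" where
  "tv a b = (if \<bar>b\<bar> \<le> \<bar>a\<bar> then b / a else a / b)"
definition binr :: "real \<Rightarrow> real \<Rightarrow> real \<Rightarrow> real" where
  "binr \<delta> a b = chart a b + 2 * of_int \<lfloor>(tv a b + 1) / \<delta>\<rfloor>"

lemma tv_bound: "\<bar>tv a b\<bar> \<le> 1"
  unfolding tv_def by (auto simp: abs_divide divide_le_eq_1)

lemma bin_close:
  assumes d: "\<delta> > 0" and eq: "binr \<delta> a b = binr \<delta> a' b'"
  shows "\<bar>a * b' - b * a'\<bar> \<le> max \<bar>a\<bar> \<bar>b\<bar> * max \<bar>a'\<bar> \<bar>b'\<bar> * \<delta>"
proof -
  define k where "k = \<lfloor>(tv a b + 1) / \<delta>\<rfloor>"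
  define k' where "k' = \<lfloor>(tv a' b' + 1) / \<delta>\<rfloor>"
  have c01: "chart a b \<in> {0,1}" "chart a' b' \<in> {0,1}" unfolding chart_def by auto
  have e: "chart a b + 2 * of_int k = chart a' b' + 2 * of_int k'"
    using eq unfolding binr_def k_def k'_def by simp
  have ck: "chart a b = chart a' b' \<and> k = k'"
  proof -
    have "chart a b - chart a' b' = 2 * of_int (k' - k)" using e by simp
    moreover have "\<bar>chart a b - chart a' b'\<bar> \<le> 1" using c01 by auto
    ultimately have "\<bar>2 * real_of_int (k' - k)\<bar> \<le> 1" by simp
    then have "real_of_int \<bar>k' - k\<bar> < 1" by (simp add: abs_mult)
    then have "k' - k = 0" by simp
    then show ?thesis using e by simp
  qed
  have "\<bar>(tv a b + 1) / \<delta> - (tv a' b' + 1) / \<delta>\<bar> < 1"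
    using ck unfolding k_def k'_def by linarith
  moreover have "(tv a b + 1) / \<delta> - (tv a' b' + 1) / \<delta> = (tv a b - tv a' b') / \<delta>"
    using d by (simp add: field_simps)
  ultimately have "\<bar>(tv a b - tv a' b') / \<delta>\<bar> < 1" by simp
  then have td: "\<bar>tv a b - tv a' b'\<bar> \<le> \<delta>" using d by (simp add: abs_divide)
  show ?thesis
  proof (cases "\<bar>b\<bar> \<le> \<bar>a\<bar>")
    case True
    then have True': "\<bar>b'\<bar> \<le> \<bar>a'\<bar>" using ck unfolding chart_def by (auto split: if_splits)
    have bt: "b = tv a b * a" using True unfolding tv_def by auto
    have bt': "b' = tv a' b' * a'" using True' unfolding tv_def by auto
    have "a * b' - b * a' = a * a' * (tv a' b' - tv a b)" by (subst bt, subst bt') (simp add: algebra_simps)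
    then have "\<bar>a * b' - b * a'\<bar> = \<bar>a\<bar> * \<bar>a'\<bar> * \<bar>tv a b - tv a' b'\<bar>" by (simp add: abs_mult abs_minus_commute)
    also have "\<dots> \<le> \<bar>a\<bar> * \<bar>a'\<bar> * \<delta>" by (rule mult_left_mono[OF td]) simp
    also have "\<dots> \<le> max \<bar>a\<bar> \<bar>b\<bar> * max \<bar>a'\<bar> \<bar>b'\<bar> * \<delta>"
      using d by (intro mult_right_mono mult_mono) auto
    finally show ?thesis .
  next
    case False
    then have False': "\<not> \<bar>b'\<bar> \<le> \<bar>a'\<bar>" using ck unfolding chart_def by (auto split: if_splits)
    have bt: "a = tv a b * b" using False unfolding tv_def by auto
    have bt': "a' = tv a' b' * b'" using False' unfolding tv_def by auto
    have "a * b' - b * a' = b * b' * (tv a b - tv a' b')" by (subst bt, subst bt') (simp add: algebra_simps)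
    then have "\<bar>a * b' - b * a'\<bar> = \<bar>b\<bar> * \<bar>b'\<bar> * \<bar>tv a b - tv a' b'\<bar>" by (simp add: abs_mult)
    also have "\<dots> \<le> \<bar>b\<bar> * \<bar>b'\<bar> * \<delta>" by (rule mult_left_mono[OF td]) simp
    also have "\<dots> \<le> max \<bar>a\<bar> \<bar>b\<bar> * max \<bar>a'\<bar> \<bar>b'\<bar> * \<delta>"
      using d by (intro mult_right_mono mult_mono) auto
    finally show ?thesis .
  qed
qed

definition nbins :: "real \<Rightarrow> nat" where
  "nbins \<delta> = 2 * (nat \<lfloor>2 / \<delta>\<rfloor> + 1)"

lemma binr_range:
  assumes d: "\<delta> > 0"
  shows "binr \<delta> a b \<in> real ` {..<nbins \<delta>}"
proof -
  define k where "k = \<lfloor>(tv a b + 1) / \<delta>\<rfloor>"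
  have t: "-1 \<le> tv a b" "tv a b \<le> 1" using tv_bound[of a b] by auto
  have "0 \<le> (tv a b + 1) / \<delta>" using t d by simp
  then have k0: "0 \<le> k" unfolding k_def by simp
  have "(tv a b + 1) / \<delta> \<le> 2 / \<delta>" using t d by (simp add: divide_right_mono)
  then have k2: "k \<le> \<lfloor>2 / \<delta>\<rfloor>" unfolding k_def by (simp add: floor_mono)
  have c01: "chart a b = 0 \<or> chart a b = 1" unfolding chart_def by auto
  define N where "N = (if chart a b = 0 then 0 else 1) + 2 * nat k"
  have "binr \<delta> a b = real N" unfolding binr_def N_def k_def[symmetric] using c01 k0 by auto
  moreover have "N < nbins \<delta>" unfolding N_def nbins_def using k0 k2 by auto
  ultimately show ?thesis by auto
qed

lemma det_key:
  fixes x :: "nat \<Rightarrow> nat \<Rightarrow> real" and v :: "nat \<Rightarrow> real"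
  assumes n: "2 \<le> n" and jk: "j < n" "k < n"
    and m: "\<eta> \<le> \<bar>Dt n (rw (\<lambda>i. x (i-1)) (unitv j) (unitv k))\<bar>" and eta: "0 < \<eta>"
    and d: "0 < \<delta>" and R: "0 \<le> R"
    and a'R: "\<bar>Dt n (rw (\<lambda>i. x (i-1)) (unitv j) v)\<bar> \<le> R"
    and b'R: "\<bar>Dt n (rw (\<lambda>i. x (i-1)) (unitv k) v)\<bar> \<le> R"
    and bin: "binr \<delta> (Dt n (rw (\<lambda>i. x (i-1)) (unitv j) (x 0))) (Dt n (rw (\<lambda>i. x (i-1)) (unitv k) (x 0)))
            = binr \<delta> (Dt n (rw (\<lambda>i. x (i-1)) (unitv j) v)) (Dt n (rw (\<lambda>i. x (i-1)) (unitv k) v))"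
  shows "\<bar>vdot n v (\<lambda>l. gen_cross n x l / supnorm n (gen_cross n x))\<bar> \<le> R * \<delta> / \<eta>"
proof -
  define A where "A = (\<lambda>i. x (i-1))"
  define mm where "mm = Dt n (rw A (unitv j) (unitv k))"
  define a where "a = Dt n (rw A (unitv j) (x 0))"
  define b where "b = Dt n (rw A (unitv k) (x 0))"
  define a' where "a' = Dt n (rw A (unitv j) v)"
  define b' where "b' = Dt n (rw A (unitv k) v)"
  define f where "f = Dt n (rw A v (x 0))"
  define N where "N = supnorm n (gen_cross n x)"
  have pl: "mm * (mm * f + a * b' - b * a') = 0"
    unfolding mm_def f_def a_def b_def a'_def b'_def by (rule plucker[OF n jk])
  have mm0: "mm \<noteq> 0" using m eta unfolding mm_def A_def by auto
  then have "mm * f + a * b' - b * a' = 0" using pl by simp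
  then have mf: "mm * f = b * a' - a * b'" by simp
  have aN: "\<bar>a\<bar> \<le> N" "\<bar>b\<bar> \<le> N"
    unfolding a_def b_def N_def A_def using supnorm_ge jk gc_Dt by metis+
  have cl: "\<bar>a * b' - b * a'\<bar> \<le> max \<bar>a\<bar> \<bar>b\<bar> * max \<bar>a'\<bar> \<bar>b'\<bar> * \<delta>"
    by (rule bin_close[OF d]) (use bin in \<open>simp add: a_def b_def a'_def b'_def A_def\<close>)
  have vd: "vdot n v (\<lambda>l. gen_cross n x l / N) = vdot n v (gen_cross n x) / N"
    unfolding vdot_def by (simp add: sum_divide_distrib)
  show ?thesis
  proof (cases "N = 0")
    case True
    then show ?thesis using vd R d eta N_def by simp
  next
    case False
    then have Npos: "N > 0" using aN by linarith
    have "\<bar>mm\<bar> * \<bar>f\<bar> \<le> N * R * \<delta>"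
    proof -
      have "\<bar>mm\<bar> * \<bar>f\<bar> = \<bar>a * b' - b * a'\<bar>" using mf by (simp add: abs_mult[symmetric] abs_minus_commute)
      also have "\<dots> \<le> max \<bar>a\<bar> \<bar>b\<bar> * max \<bar>a'\<bar> \<bar>b'\<bar> * \<delta>" by (rule cl)
      also have "\<dots> \<le> N * R * \<delta>"
        using aN a'R b'R d R unfolding a'_def b'_def A_def by (intro mult_right_mono mult_mono) auto
      finally show ?thesis .
    qed
    then have "\<eta> * \<bar>f\<bar> \<le> N * R * \<delta>"
      using m unfolding mm_def A_def by (meson abs_ge_zero mult_right_mono order.trans)
    then have "\<bar>f\<bar> / N \<le> R * \<delta> / \<eta>" using Npos eta
      by (simp add: divide_simps mult.commute mult.left_commute)
    moreover have "vdot n v (gen_cross n x) = f" unfolding f_def A_def using vdot_gc n by simp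
    ultimately show ?thesis using vd Npos unfolding N_def by (simp add: abs_divide)
  qed
qed

lemma det_zero:
  fixes x :: "nat \<Rightarrow> nat \<Rightarrow> real"
  assumes n: "2 \<le> n" and z: "\<forall>j<n. \<forall>k<n. Dt n (rw (\<lambda>i. x (i-1)) (unitv j) (unitv k)) = 0"
  shows "vdot n v (\<lambda>l. gen_cross n x l / supnorm n (gen_cross n x)) = 0"
proof -
  have "gen_cross n x l = 0" for l
  proof (cases "l < n")
    case True
    then show ?thesis using Dt_lin1[of n "\<lambda>i. x (i-1)" "unitv l" "x 0"] n z by (simp add: gc_Dt)
  next
    case False
    then show ?thesis unfolding gen_cross_def by simp
  qed
  then show ?thesis unfolding vdot_def by simp
qed

lemma fub3:
  fixes \<mu> :: "'b measure" and J :: "nat set" and N1 :: nat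
  assumes P: "prob_space \<mu>" and J: "finite J" "0 \<notin> J" "N1 \<notin> J" and N1: "N1 \<noteq> 0"
    and f: "f \<in> borel_measurable (PiM (insert 0 (insert N1 J)) (\<lambda>_. \<mu>))"
  shows "(\<integral>\<^sup>+x. f x \<partial>PiM (insert 0 (insert N1 J)) (\<lambda>_. \<mu>)) =
         (\<integral>\<^sup>+z. \<integral>\<^sup>+v. \<integral>\<^sup>+u. f (z(N1 := v, 0 := u)) \<partial>\<mu> \<partial>\<mu> \<partial>PiM J (\<lambda>_. \<mu>))"
proof -
  interpret prob_space \<mu> by fact
  interpret ps: product_sigma_finite "\<lambda>_. \<mu>" by standard
  have 1: "(\<integral>\<^sup>+x. f x \<partial>PiM (insert 0 (insert N1 J)) (\<lambda>_. \<mu>)) =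
      (\<integral>\<^sup>+y. \<integral>\<^sup>+u. f (y(0 := u)) \<partial>\<mu> \<partial>PiM (insert N1 J) (\<lambda>_. \<mu>))"
    by (rule ps.product_nn_integral_insert) (use J N1 f in auto)
  have gm: "(\<lambda>y. \<integral>\<^sup>+u. f (y(0 := u)) \<partial>\<mu>) \<in> borel_measurable (PiM (insert N1 J) (\<lambda>_. \<mu>))"
    using f by measurable
  have 2: "(\<integral>\<^sup>+y. \<integral>\<^sup>+u. f (y(0 := u)) \<partial>\<mu> \<partial>PiM (insert N1 J) (\<lambda>_. \<mu>)) =
      (\<integral>\<^sup>+z. \<integral>\<^sup>+v. \<integral>\<^sup>+u. f (z(N1 := v, 0 := u)) \<partial>\<mu> \<partial>\<mu> \<partial>PiM J (\<lambda>_. \<mu>))"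
    by (rule ps.product_nn_integral_insert[OF J(1,3) gm])
  show ?thesis using 1 2 by simp
qed

lemma ennreal_sum_sq:
  fixes h :: "'c \<Rightarrow> ennreal"
  assumes L: "finite L" and h: "\<And>b. b \<in> L \<Longrightarrow> h b \<noteq> \<top>"
  shows "(\<Sum>b\<in>L. h b)\<^sup>2 \<le> of_nat (card L) * (\<Sum>b\<in>L. (h b)\<^sup>2)"
proof -
  define r where "r = (\<lambda>b. enn2real (h b))"
  have hr: "h b = ennreal (r b)" if "b \<in> L" for b using h[OF that] unfolding r_def by (simp add: ennreal_enn2real_if)
  have r0: "0 \<le> r b" for b unfolding r_def by simp
  have "(\<Sum>b\<in>L. h b) = (\<Sum>b\<in>L. ennreal (r b))" by (rule sum.cong) (auto simp: hr)
  also have "\<dots> = ennreal (\<Sum>b\<in>L. r b)" by (rule sum_ennreal) (use r0 in auto)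
  finally have "(\<Sum>b\<in>L. h b) = ennreal (\<Sum>b\<in>L. r b)" .
  then have lhs: "(\<Sum>b\<in>L. h b)\<^sup>2 = ennreal ((\<Sum>b\<in>L. r b)\<^sup>2)"
    using r0 by (simp add: ennreal_power sum_nonneg)
  have "(\<Sum>b\<in>L. (h b)\<^sup>2) = (\<Sum>b\<in>L. ennreal ((r b)\<^sup>2))"
    by (rule sum.cong) (auto simp: hr ennreal_power r0)
  also have "\<dots> = ennreal (\<Sum>b\<in>L. (r b)\<^sup>2)" by (rule sum_ennreal) auto
  finally have "(\<Sum>b\<in>L. (h b)\<^sup>2) = ennreal (\<Sum>b\<in>L. (r b)\<^sup>2)" .
  then have rhs: "of_nat (card L) * (\<Sum>b\<in>L. (h b)\<^sup>2) = ennreal (real (card L) * (\<Sum>b\<in>L. (r b)\<^sup>2))"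
  proof -
    have T0: "0 \<le> (\<Sum>b\<in>L. (r b)\<^sup>2)" by (simp add: sum_nonneg)
    have "ennreal (real (card L) * (\<Sum>b\<in>L. (r b)\<^sup>2)) = ennreal (real (card L)) * ennreal (\<Sum>b\<in>L. (r b)\<^sup>2)"
      by (rule ennreal_mult) (use T0 in auto)
    moreover have "ennreal (real (card L)) = of_nat (card L)" by (rule ennreal_of_nat_eq_real_of_nat[symmetric])
    ultimately show ?thesis using \<open>(\<Sum>b\<in>L. (h b)\<^sup>2) = ennreal (\<Sum>b\<in>L. (r b)\<^sup>2)\<close> by simp
  qed
  have "(\<Sum>b\<in>L. r b * 1)\<^sup>2 \<le> (\<Sum>b\<in>L. (r b)\<^sup>2) * (\<Sum>b\<in>L. 1\<^sup>2)"
    by (rule Cauchy_Schwarz_ineq_sum)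
  then have "(\<Sum>b\<in>L. r b)\<^sup>2 \<le> real (card L) * (\<Sum>b\<in>L. (r b)\<^sup>2)" by (simp add: mult.commute)
  then show ?thesis unfolding lhs rhs by (rule ennreal_leI)
qed

lemma cells:
  fixes \<mu> :: "'b measure" and J :: "nat set" and N1 :: nat and \<phi> :: "'b \<Rightarrow> (nat \<Rightarrow> 'b) \<Rightarrow> real"
  assumes P: "prob_space \<mu>" and J: "finite J" "0 \<notin> J" "N1 \<notin> J" and N1: "N1 \<noteq> 0"
    and phim: "(\<lambda>(z,u). \<phi> u z) \<in> borel_measurable (PiM J (\<lambda>_. \<mu>) \<Otimes>\<^sub>M \<mu>)"
    and dep: "\<And>a x y. (\<And>i. i \<in> J \<Longrightarrow> x i = y i) \<Longrightarrow> \<phi> a x = \<phi> a y"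
    and L: "finite L"
  defines "PP \<equiv> PiM (insert 0 (insert N1 J)) (\<lambda>_. \<mu>)"
  shows "(emeasure PP {x \<in> space PP. \<phi> (x 0) x \<in> L})\<^sup>2
          \<le> of_nat (card L) * emeasure PP {x \<in> space PP. \<phi> (x 0) x \<in> L \<and> \<phi> (x N1) x = \<phi> (x 0) x}"
proof -
  interpret prob_space \<mu> by fact
  interpret PJ: prob_space "PiM J (\<lambda>_. \<mu>)" by (intro prob_space_PiM) (simp add: P)
  let ?Q = "PiM J (\<lambda>_. \<mu>)"
  define ind where "ind = (\<lambda>b a x. if \<phi> a x = b then 1 else (0::ennreal))"
  define H where "H = (\<lambda>b z. \<integral>\<^sup>+u. ind b u z \<partial>\<mu>)"
  have restr: "(\<lambda>x. (restrict x J, x i)) \<in> measurable PP (?Q \<Otimes>\<^sub>M \<mu>)" if "i \<in> insert 0 (insert N1 J)" for i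
    unfolding PP_def using that by (intro measurable_Pair measurable_restrict_subset measurable_component_singleton) auto
  have phii: "(\<lambda>x. \<phi> (x i) x) \<in> borel_measurable PP" if "i \<in> insert 0 (insert N1 J)" for i
  proof -
    have "(\<lambda>x. (\<lambda>(z,u). \<phi> u z) (restrict x J, x i)) \<in> borel_measurable PP"
      by (rule measurable_compose[OF restr[OF that] phim])
    moreover have "\<phi> (x i) x = (\<lambda>(z,u). \<phi> u z) (restrict x J, x i)" for x
      by (simp, rule dep) simp
    ultimately show ?thesis by simp
  qed
  have p0: "(\<lambda>x. \<phi> (x 0) x) \<in> borel_measurable PP" by (rule phii) simp
  have pN: "(\<lambda>x. \<phi> (x N1) x) \<in> borel_measurable PP" by (rule phii) simp
  have Lb: "L \<in> sets borel" using L by (simp add: finite_imp_closed)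
  have pL: "Measurable.pred PP (\<lambda>x. \<phi> (x 0) x \<in> L)" by (rule pred_sets2[OF Lb p0])
  have pE: "Measurable.pred PP (\<lambda>x. \<phi> (x N1) x = \<phi> (x 0) x)"
    unfolding pred_def by (rule measurable_equality_set[OF pN p0])
  have sq01: "\<And>P. (if P then 1 else 0::ennreal) * (if P then 1 else 0) = (if P then 1 else 0)" by simp
  have indm: "(\<lambda>x. ind b (x i) x) \<in> borel_measurable PP" if "i \<in> insert 0 (insert N1 J)" for b i
    unfolding ind_def using phii[OF that] by measurable
  have indpm: "(\<lambda>(z,u). ind b u z) \<in> borel_measurable (?Q \<Otimes>\<^sub>M \<mu>)" for b
  proof -
    have "(\<lambda>w. if (\<lambda>(z,u). \<phi> u z) w = b then 1 else (0::ennreal)) \<in> borel_measurable (?Q \<Otimes>\<^sub>M \<mu>)"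
      using phim by measurable
    then show ?thesis unfolding ind_def by (simp add: case_prod_beta')
  qed
  have Hm: "H b \<in> borel_measurable ?Q" for b
    unfolding H_def using indpm[of b] by measurable
  have indu: "(\<lambda>u. ind b u z) \<in> borel_measurable \<mu>" if "z \<in> space ?Q" for b z
    using measurable_Pair2[OF indpm that] by simp
  have H1: "H b z \<le> 1" for b z
  proof -
    have "H b z \<le> (\<integral>\<^sup>+u. 1 \<partial>\<mu>)" unfolding H_def ind_def by (rule nn_integral_mono) auto
    then show ?thesis by (simp add: emeasure_space_1)
  qed
  have dep': "ind b u (z(N1 := v, 0 := u')) = ind b u z" for b u z v u'
  proof -
    have "\<phi> u (z(N1 := v, 0 := u')) = \<phi> u z" by (rule dep) (use J in auto)
    then show ?thesis unfolding ind_def by simp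
  qed
  have fubPP: "(\<integral>\<^sup>+x. f x \<partial>PP) = (\<integral>\<^sup>+z. \<integral>\<^sup>+v. \<integral>\<^sup>+u. f (z(N1 := v, 0 := u)) \<partial>\<mu> \<partial>\<mu> \<partial>?Q)"
    if "f \<in> borel_measurable PP" for f
    unfolding PP_def by (rule fub3[OF P J N1]) (use that PP_def in simp)
  have A0: "emeasure PP {x \<in> space PP. \<phi> (x 0) x \<in> L} = (\<integral>\<^sup>+z. (\<Sum>b\<in>L. H b z) \<partial>?Q)"
  proof -
    have "emeasure PP {x \<in> space PP. \<phi> (x 0) x \<in> L} = (\<integral>\<^sup>+x. indicator {x \<in> space PP. \<phi> (x 0) x \<in> L} x \<partial>PP)"
      by (rule nn_integral_indicator[symmetric]) (use pL in measurable)
    also have "\<dots> = (\<integral>\<^sup>+x. (\<Sum>b\<in>L. ind b (x 0) x) \<partial>PP)"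
      by (rule nn_integral_cong) (auto simp: ind_def indicator_def sum.delta L)
    also have "\<dots> = (\<Sum>b\<in>L. \<integral>\<^sup>+x. ind b (x 0) x \<partial>PP)"
      by (rule nn_integral_sum) (use indm in auto)
    also have "\<dots> = (\<Sum>b\<in>L. \<integral>\<^sup>+z. H b z \<partial>?Q)"
    proof (rule sum.cong[OF refl])
      fix b assume "b \<in> L"
      have "(\<integral>\<^sup>+x. ind b (x 0) x \<partial>PP) = (\<integral>\<^sup>+z. \<integral>\<^sup>+v. \<integral>\<^sup>+u. ind b u z \<partial>\<mu> \<partial>\<mu> \<partial>?Q)"
        using fubPP[OF indm[of 0 b]] by (simp add: dep')
      also have "\<dots> = (\<integral>\<^sup>+z. H b z \<partial>?Q)" unfolding H_def by (simp add: emeasure_space_1)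
      finally show "(\<integral>\<^sup>+x. ind b (x 0) x \<partial>PP) = (\<integral>\<^sup>+z. H b z \<partial>?Q)" .
    qed
    also have "\<dots> = (\<integral>\<^sup>+z. (\<Sum>b\<in>L. H b z) \<partial>?Q)"
      by (rule nn_integral_sum[symmetric]) (use Hm in auto)
    finally show ?thesis .
  qed
  have A1: "emeasure PP {x \<in> space PP. \<phi> (x 0) x \<in> L \<and> \<phi> (x N1) x = \<phi> (x 0) x} = (\<Sum>b\<in>L. \<integral>\<^sup>+z. (H b z)\<^sup>2 \<partial>?Q)"
  proof -
    have "emeasure PP {x \<in> space PP. \<phi> (x 0) x \<in> L \<and> \<phi> (x N1) x = \<phi> (x 0) x}
        = (\<integral>\<^sup>+x. indicator {x \<in> space PP. \<phi> (x 0) x \<in> L \<and> \<phi> (x N1) x = \<phi> (x 0) x} x \<partial>PP)"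
      by (rule nn_integral_indicator[symmetric]) (use pL pE in measurable)
    also have "\<dots> = (\<integral>\<^sup>+x. (\<Sum>b\<in>L. ind b (x 0) x * ind b (x N1) x) \<partial>PP)"
      by (rule nn_integral_cong) (auto simp: ind_def indicator_def sum.delta L sq01 if_distrib cong: if_cong)
    also have "\<dots> = (\<Sum>b\<in>L. \<integral>\<^sup>+x. ind b (x 0) x * ind b (x N1) x \<partial>PP)"
      by (rule nn_integral_sum) (use indm in auto)
    also have "\<dots> = (\<Sum>b\<in>L. \<integral>\<^sup>+z. (H b z)\<^sup>2 \<partial>?Q)"
    proof (rule sum.cong[OF refl])
      fix b assume "b \<in> L"
      have "(\<integral>\<^sup>+x. ind b (x 0) x * ind b (x N1) x \<partial>PP) = (\<integral>\<^sup>+z. \<integral>\<^sup>+v. \<integral>\<^sup>+u. ind b u z * ind b v z \<partial>\<mu> \<partial>\<mu> \<partial>?Q)"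
        using fubPP[of "\<lambda>x. ind b (x 0) x * ind b (x N1) x"] indm[of 0 b] indm[of N1 b] N1
        by (simp add: dep')
      also have "\<dots> = (\<integral>\<^sup>+z. (H b z)\<^sup>2 \<partial>?Q)"
      proof (rule nn_integral_cong)
        fix z assume z: "z \<in> space ?Q"
        have "(\<integral>\<^sup>+v. \<integral>\<^sup>+u. ind b u z * ind b v z \<partial>\<mu> \<partial>\<mu>) = (\<integral>\<^sup>+v. H b z * ind b v z \<partial>\<mu>)"
          unfolding H_def by (rule nn_integral_cong) (rule nn_integral_multc[OF indu[OF z]])
        also have "\<dots> = H b z * H b z"
          by (subst nn_integral_cmult[OF indu[OF z]]) (simp add: H_def)
        finally show "(\<integral>\<^sup>+v. \<integral>\<^sup>+u. ind b u z * ind b v z \<partial>\<mu> \<partial>\<mu>) = (H b z)\<^sup>2"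
          by (simp add: power2_eq_square)
      qed
      finally show "(\<integral>\<^sup>+x. ind b (x 0) x * ind b (x N1) x \<partial>PP) = (\<integral>\<^sup>+z. (H b z)\<^sup>2 \<partial>?Q)" .
    qed
    finally show ?thesis .
  qed
  define F where "F = (\<lambda>z. \<Sum>b\<in>L. H b z)"
  have Fm: "F \<in> borel_measurable ?Q" unfolding F_def using Hm by measurable
  have "(\<integral>\<^sup>+z. F z \<partial>?Q)\<^sup>2 = (\<integral>\<^sup>+z. F z * 1 \<partial>?Q)\<^sup>2" by simp
  also have "\<dots> \<le> (\<integral>\<^sup>+z. F z ^ 2 \<partial>?Q) * (\<integral>\<^sup>+z. 1 ^ 2 \<partial>?Q)"
    by (rule Cauchy_Schwarz_nn_integral) (use Fm in auto)
  also have "\<dots> = (\<integral>\<^sup>+z. F z ^ 2 \<partial>?Q)" by (simp add: PJ.emeasure_space_1)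
  also have "\<dots> \<le> (\<integral>\<^sup>+z. of_nat (card L) * (\<Sum>b\<in>L. (H b z)\<^sup>2) \<partial>?Q)"
    unfolding F_def
    by (rule nn_integral_mono, rule ennreal_sum_sq[OF L]) (metis H1 ennreal_one_neq_top neq_top_trans)
  also have "\<dots> = of_nat (card L) * (\<Sum>b\<in>L. \<integral>\<^sup>+z. (H b z)\<^sup>2 \<partial>?Q)"
  proof -
    have "(\<integral>\<^sup>+z. (\<Sum>b\<in>L. (H b z)\<^sup>2) \<partial>?Q) = (\<Sum>b\<in>L. \<integral>\<^sup>+z. (H b z)\<^sup>2 \<partial>?Q)"
      by (rule nn_integral_sum) (use Hm in measurable)
    moreover have "(\<lambda>z. \<Sum>b\<in>L. (H b z)\<^sup>2) \<in> borel_measurable ?Q" using Hm by measurable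
    ultimately show ?thesis by (simp add: nn_integral_cmult)
  qed
  finally show ?thesis unfolding A0 A1 F_def .
qed

lemma Dt_meas:
  assumes "\<And>i c. i<n \<Longrightarrow> c<n \<Longrightarrow> (\<lambda>w. r w i c) \<in> borel_measurable K"
  shows "(\<lambda>w. Dt n (r w)) \<in> borel_measurable K"
  unfolding Dt_def
proof (rule borel_measurable_sum)
  fix p assume p: "p \<in> {p. p permutes {..<n}}"
  have "(\<lambda>w. \<Prod>i<n. r w i (p i)) \<in> borel_measurable K"
  proof (rule borel_measurable_prod)
    fix i assume "i \<in> {..<n}"
    then have "i < n" "p i < n" using p permutes_in_image[of p "{..<n}" i] by auto
    then show "(\<lambda>w. r w i (p i)) \<in> borel_measurable K" using assms by simp
  qed
  then show "(\<lambda>w. of_int (sign p) * (\<Prod>i<n. r w i (p i))) \<in> borel_measurable K" by measurable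
qed

definition SS :: "nat \<Rightarrow> (nat \<Rightarrow> real) measure" where
  "SS n = PiM {..<n} (\<lambda>_. borel)"

lemma vec_comp_meas:
  assumes "sets N = sets (SS n)" "b < n"
  shows "(\<lambda>y. y b) \<in> borel_measurable N"
proof -
  have "(\<lambda>y. y b) \<in> borel_measurable (SS n)" unfolding SS_def
    by (rule measurable_component_singleton) (use assms in auto)
  moreover have eq: "measurable N (borel::real measure) = measurable (SS n) borel" by (rule measurable_cong_sets[OF assms(1) refl])
  ultimately show ?thesis by simp
qed

lemma comp_meas:
  assumes "sets N = sets (SS n)" "a \<in> I" "b < n"
  shows "(\<lambda>x. x a b) \<in> borel_measurable (PiM I (\<lambda>_. N))"
  using measurable_compose[OF measurable_component_singleton[OF assms(2)] vec_comp_meas[OF assms(1,3)]]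
  by simp

definition mjk :: "nat \<Rightarrow> nat \<Rightarrow> nat \<Rightarrow> (nat \<Rightarrow> nat \<Rightarrow> real) \<Rightarrow> real" where
  "mjk n j k x = Dt n (rw (\<lambda>i. x (i-1)) (unitv j) (unitv k))"
definition zz :: "nat \<Rightarrow> nat \<Rightarrow> (nat \<Rightarrow> real) \<Rightarrow> (nat \<Rightarrow> nat \<Rightarrow> real) \<Rightarrow> real" where
  "zz n j a x = Dt n (rw (\<lambda>i. x (i-1)) (unitv j) a)"
definition good :: "nat \<Rightarrow> nat \<Rightarrow> nat \<Rightarrow> real \<Rightarrow> real \<Rightarrow> (nat \<Rightarrow> real) \<Rightarrow> (nat \<Rightarrow> nat \<Rightarrow> real) \<Rightarrow> bool" where
  "good n j k \<eta> R a x \<longleftrightarrow> \<eta> \<le> \<bar>mjk n j k x\<bar> \<and> \<bar>zz n j a x\<bar> \<le> R \<and> \<bar>zz n k a x\<bar> \<le> R"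
definition phi :: "nat \<Rightarrow> nat \<Rightarrow> nat \<Rightarrow> real \<Rightarrow> real \<Rightarrow> real \<Rightarrow> (nat \<Rightarrow> real) \<Rightarrow> (nat \<Rightarrow> nat \<Rightarrow> real) \<Rightarrow> real" where
  "phi n j k \<eta> R \<delta> a x = (if good n j k \<eta> R a x then binr \<delta> (zz n j a x) (zz n k a x) else -1)"
definition Zf :: "nat \<Rightarrow> (nat \<Rightarrow> nat \<Rightarrow> real) \<Rightarrow> real" where
  "Zf n x = vdot n (x (n-1)) (\<lambda>l. gen_cross n x l / supnorm n (gen_cross n x))"

lemma rw_dep:
  assumes "\<And>i. i \<in> {1..<n-1} \<Longrightarrow> x i = y i"
  shows "Dt n (rw (\<lambda>i. x (i-1)) r0 r1) = Dt n (rw (\<lambda>i. y (i-1)) r0 r1)"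
proof (rule Dt_cong)
  fix i c assume i: "i < n" "c < n"
  show "rw (\<lambda>i. x (i-1)) r0 r1 i c = rw (\<lambda>i. y (i-1)) r0 r1 i c"
  proof (cases "i = 0 \<or> i = 1")
    case True then show ?thesis unfolding rw_def by auto
  next
    case False
    then have "i - 1 \<in> {1..<n-1}" using i by auto
    then have "x (i-1) = y (i-1)" by (rule assms)
    then show ?thesis unfolding rw_def using False by simp
  qed
qed

lemma phi_dep:
  assumes "\<And>i. i \<in> {1..<n-1} \<Longrightarrow> x i = y i"
  shows "phi n j k \<eta> R \<delta> a x = phi n j k \<eta> R \<delta> a y"
proof -
  have eq: "\<And>r0 r1. Dt n (rw (\<lambda>i. x (i-1)) r0 r1) = Dt n (rw (\<lambda>i. y (i-1)) r0 r1)"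
    by (rule rw_dep[OF assms])
  show ?thesis unfolding phi_def good_def mjk_def zz_def by (simp only: eq)
qed

lemma phim:
  assumes N: "sets N = sets (SS n)"
  shows "(\<lambda>(z,u). phi n j k \<eta> R \<delta> u z) \<in> borel_measurable (PiM {1..<n-1} (\<lambda>_. N) \<Otimes>\<^sub>M N)"
proof -
  let ?K = "PiM {1..<n-1} (\<lambda>_. N) \<Otimes>\<^sub>M N"
  have rows: "(\<lambda>w. rw (\<lambda>i. fst w (i-1)) r0 (f w) i c) \<in> borel_measurable ?K"
    if "i < n" "c < n" and f: "\<And>c. c < n \<Longrightarrow> (\<lambda>w. f w c) \<in> borel_measurable ?K" for r0 f i c
  proof -
    consider "i = 0" | "i = 1" | "1 < i" by linarith
    then show ?thesis
    proof cases
      case 1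
      then show ?thesis unfolding rw_def by simp
    next
      case 2
      then show ?thesis unfolding rw_def using f[OF \<open>c<n\<close>] by simp
    next
      case 3
      then have im: "i - 1 \<in> {1..<n-1}" using that by auto
      have "(\<lambda>x. x (i-1) c) \<in> borel_measurable (PiM {1..<n-1} (\<lambda>_. N))"
        by (rule comp_meas[OF N im \<open>c<n\<close>])
      then have "(\<lambda>w. fst w (i-1) c) \<in> borel_measurable ?K"
        using measurable_compose[OF measurable_fst] by fastforce
      then show ?thesis using 3 unfolding rw_def by simp
    qed
  qed
  have sndm: "(\<lambda>w. snd w c) \<in> borel_measurable ?K" if "c < n" for c
    using measurable_compose[OF measurable_snd vec_comp_meas[OF N that]] by simp
  have constm: "(\<lambda>w. unitv l c) \<in> borel_measurable ?K" for l c by simp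
  have m1: "(\<lambda>w. mjk n j k (fst w)) \<in> borel_measurable ?K"
    unfolding mjk_def by (rule Dt_meas, rule rows) (auto intro: constm)
  have m2: "(\<lambda>w. zz n l (snd w) (fst w)) \<in> borel_measurable ?K" for l
    unfolding zz_def
  proof (rule Dt_meas)
    fix i c assume ic: "i<n" "c<n"
    show "(\<lambda>w. rw (\<lambda>i. fst w (i-1)) (unitv l) (snd w) i c) \<in> borel_measurable ?K"
      by (rule rows[OF ic sndm])
  qed
  show ?thesis unfolding phi_def good_def binr_def chart_def tv_def case_prod_beta
    using m1 m2[of j] m2[of k] by measurable
qed

lemma rows_meas:
  assumes N: "sets N = sets (SS n)" and ic: "i < n" "c < n"
    and f: "\<And>c. c < n \<Longrightarrow> (\<lambda>x. f x c) \<in> borel_measurable (PiM {..<n} (\<lambda>_. N))"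
  shows "(\<lambda>x. rw (\<lambda>i. x (i-1)) r0 (f x) i c) \<in> borel_measurable (PiM {..<n} (\<lambda>_. N))"
proof -
  consider "i = 0" | "i = 1" | "1 < i" by linarith
  then show ?thesis
  proof cases
    case 1
    then show ?thesis unfolding rw_def by simp
  next
    case 2
    then show ?thesis unfolding rw_def using f[OF ic(2)] by simp
  next
    case 3
    then have im: "i - 1 \<in> {..<n}" using ic by auto
    have "(\<lambda>x. x (i-1) c) \<in> borel_measurable (PiM {..<n} (\<lambda>_. N))"
      by (rule comp_meas[OF N im ic(2)])
    then show ?thesis using 3 unfolding rw_def by simp
  qed
qed

lemma x0_meas:
  assumes N: "sets N = sets (SS n)" and n: "0 < n" and c: "c < n"
  shows "(\<lambda>x. x 0 c) \<in> borel_measurable (PiM {..<n} (\<lambda>_. N))"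
  by (rule comp_meas[OF N _ c]) (use n in auto)

lemma gc_meas:
  assumes N: "sets N = sets (SS n)" and l: "l < n"
  shows "(\<lambda>x. gen_cross n x l) \<in> borel_measurable (PiM {..<n} (\<lambda>_. N))"
proof -
  have "(\<lambda>x. Dt n (rw (\<lambda>i. x (i-1)) (unitv l) (x 0))) \<in> borel_measurable (PiM {..<n} (\<lambda>_. N))"
  proof (rule Dt_meas)
    fix i c assume ic: "i < n" "c < n"
    show "(\<lambda>x. rw (\<lambda>i. x (i-1)) (unitv l) (x 0) i c) \<in> borel_measurable (PiM {..<n} (\<lambda>_. N))"
      by (rule rows_meas[OF N ic x0_meas[OF N]]) (use ic in auto)
  qed
  then show ?thesis using gc_Dt[OF l] by simp
qed

lemma Zf_meas:
  assumes N: "sets N = sets (SS n)" and n: "2 \<le> n"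
  shows "Zf n \<in> borel_measurable (PiM {..<n} (\<lambda>_. N))"
proof -
  have g: "(\<lambda>x. gen_cross n x l) \<in> borel_measurable (PiM {..<n} (\<lambda>_. N))" if "l \<in> {..<n}" for l
    using gc_meas[OF N] that by simp
  have ga: "(\<lambda>x. \<bar>gen_cross n x l\<bar>) \<in> borel_measurable (PiM {..<n} (\<lambda>_. N))" if "l \<in> {..<n}" for l
    using g[OF that] by measurable
  have s: "(\<lambda>x. supnorm n (gen_cross n x)) \<in> borel_measurable (PiM {..<n} (\<lambda>_. N))"
    unfolding supnorm_def by (rule borel_measurable_Max) (use ga in auto)
  have xl: "(\<lambda>x. x (n-1) l) \<in> borel_measurable (PiM {..<n} (\<lambda>_. N))" if "l \<in> {..<n}" for l
    by (rule comp_meas[OF N]) (use n that in auto)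
  show ?thesis unfolding Zf_def vdot_def
  proof (rule borel_measurable_sum)
    fix l assume l: "l \<in> {..<n}"
    show "(\<lambda>x. x (n - 1) l * (gen_cross n x l / supnorm n (gen_cross n x))) \<in> borel_measurable (PiM {..<n} (\<lambda>_. N))"
      using xl[OF l] g[OF l] s by measurable
  qed
qed

lemma mjk_meas:
  assumes N: "sets N = sets (SS n)"
  shows "(\<lambda>x. mjk n j k x) \<in> borel_measurable (PiM {..<n} (\<lambda>_. N))"
  unfolding mjk_def
proof (rule Dt_meas)
  fix i c assume ic: "i < n" "c < n"
  show "(\<lambda>x. rw (\<lambda>i. x (i-1)) (unitv j) (unitv k) i c) \<in> borel_measurable (PiM {..<n} (\<lambda>_. N))"
    using rows_meas[OF N ic, of "\<lambda>x. unitv k"] by simp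
qed

lemma zz_meas:
  assumes N: "sets N = sets (SS n)" and n: "0 < n"
  shows "(\<lambda>x. zz n j (x 0) x) \<in> borel_measurable (PiM {..<n} (\<lambda>_. N))"
  unfolding zz_def
proof (rule Dt_meas)
  fix i c assume ic: "i < n" "c < n"
  show "(\<lambda>x. rw (\<lambda>i. x (i-1)) (unitv j) (x 0) i c) \<in> borel_measurable (PiM {..<n} (\<lambda>_. N))"
    by (rule rows_meas[OF N ic x0_meas[OF N n]])
qed

lemma ennreal_sq_le:
  assumes a: "0 \<le> a" and b: "0 \<le> b" and le: "(ennreal a)\<^sup>2 \<le> of_nat K * ennreal b"
  shows "a\<^sup>2 \<le> real K * b"
proof -
  have "(ennreal a)\<^sup>2 = ennreal (a\<^sup>2)" using a by (simp add: ennreal_power)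
  moreover have "of_nat K * ennreal b = ennreal (real K * b)"
  proof -
    have "ennreal (real K * b) = ennreal (real K) * ennreal b" by (rule ennreal_mult) (use b in auto)
    moreover have "ennreal (real K) = of_nat K" by (rule ennreal_of_nat_eq_real_of_nat[symmetric])
    ultimately show ?thesis by simp
  qed
  ultimately have "ennreal (a\<^sup>2) \<le> ennreal (real K * b)" using le by simp
  then show ?thesis using b by (simp add: ennreal_le_iff)
qed

lemma nbins_bound:
  assumes d: "0 < \<delta>"
  shows "real (nbins \<delta>) \<le> 4 / \<delta> + 2"
proof -
  have f0: "0 \<le> \<lfloor>2 / \<delta>\<rfloor>" using d by simp
  have "real (nat \<lfloor>2 / \<delta>\<rfloor>) = real_of_int \<lfloor>2 / \<delta>\<rfloor>" using f0 by simp
  also have "\<dots> \<le> 2 / \<delta>" by simp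
  finally have "real (nat \<lfloor>2 / \<delta>\<rfloor>) \<le> 2 / \<delta>" .
  then show ?thesis unfolding nbins_def by simp
qed

lemma key_Pi:
  fixes \<mu> :: "(nat \<Rightarrow> real) measure"
  assumes P: "prob_space \<mu>" and N: "sets \<mu> = sets (SS n)" and n: "2 \<le> n"
  defines "PP \<equiv> PiM {..<n} (\<lambda>_. \<mu>)"
  shows "\<exists>c>0. \<forall>\<epsilon>. 0 < \<epsilon> \<longrightarrow> \<epsilon> \<le> 1 \<longrightarrow> c * \<epsilon> \<le> measure PP {x \<in> space PP. \<bar>Zf n x\<bar> < \<epsilon>}"
proof -
  interpret PPp: prob_space PP unfolding PP_def by (intro prob_space_PiM) (simp add: P)
  have n0: "0 < n" using n by simp
  have Zm: "Zf n \<in> borel_measurable PP" unfolding PP_def by (rule Zf_meas[OF N n])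
  have Qm: "{x \<in> space PP. \<bar>Zf n x\<bar> < \<epsilon>} \<in> sets PP" for \<epsilon> using Zm by measurable
  have mm: "(\<lambda>x. mjk n j k x) \<in> borel_measurable PP" for j k unfolding PP_def by (rule mjk_meas[OF N])
  have zm: "(\<lambda>x. zz n j (x 0) x) \<in> borel_measurable PP" for j unfolding PP_def by (rule zz_meas[OF N n0])
  define B0 where "B0 = {x \<in> space PP. \<forall>j<n. \<forall>k<n. mjk n j k x = 0}"
  define B where "B = (\<lambda>(j,k,i). {x \<in> space PP. j < n \<and> k < n \<and> good n j k (1 / real (Suc i)) (real (Suc i)) (x 0) x})"
  have B0m: "B0 \<in> sets PP" unfolding B0_def using mm by measurable
  have Bm: "B t \<in> sets PP" for t
  proof -
    obtain j k i where t: "t = (j,k,i)" by (cases t) auto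
    show ?thesis unfolding B_def t good_def prod.case using mm zm by measurable
  qed
  have cover: "space PP \<subseteq> B0 \<union> (\<Union>t. B t)"
  proof
    fix x assume x: "x \<in> space PP"
    show "x \<in> B0 \<union> (\<Union>t. B t)"
    proof (cases "x \<in> B0")
      case False
      then obtain j k where jk: "j < n" "k < n" "mjk n j k x \<noteq> 0" using x unfolding B0_def by auto
      obtain i1 :: nat where i1: "1 / \<bar>mjk n j k x\<bar> < i1" using reals_Archimedean2 by blast
      obtain i2 :: nat where i2: "max \<bar>zz n j (x 0) x\<bar> \<bar>zz n k (x 0) x\<bar> < i2" using reals_Archimedean2 by blast
      define i where "i = max i1 i2"
      have "1 / real (Suc i) \<le> \<bar>mjk n j k x\<bar>"
      proof -
        have pos: "0 < \<bar>mjk n j k x\<bar>" using jk by simp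
        have "1 / \<bar>mjk n j k x\<bar> < real (Suc i)" using i1 unfolding i_def by linarith
        then show ?thesis using pos by (simp add: field_simps)
      qed
      moreover have "\<bar>zz n j (x 0) x\<bar> \<le> real (Suc i)" "\<bar>zz n k (x 0) x\<bar> \<le> real (Suc i)"
        using i2 unfolding i_def by linarith+
      ultimately have "x \<in> B (j,k,i)" unfolding B_def good_def using x jk by auto
      then show ?thesis by blast
    qed simp
  qed
  have pos: "0 < emeasure PP B0 \<or> (\<exists>t. 0 < emeasure PP (B t))"
  proof (rule ccontr)
    assume "\<not> ?thesis"
    then have z: "emeasure PP B0 = 0" "\<And>t. emeasure PP (B t) = 0" by (auto simp: zero_less_iff_neq_zero)
    have "B0 \<in> null_sets PP" using z B0m by auto
    moreover have "(\<Union>t. B t) \<in> null_sets PP"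
      by (rule null_sets_UN) (use z Bm in auto)
    ultimately have "B0 \<union> (\<Union>t. B t) \<in> null_sets PP" by auto
    then have "space PP \<in> null_sets PP" using null_sets_subset[OF _ sets.top cover] by blast
    then show False using PPp.emeasure_space_1 by auto
  qed
  show ?thesis
  proof (cases "0 < emeasure PP B0")
    case True
    define c where "c = measure PP B0"
    have c0: "0 < c" using True unfolding c_def by (simp add: PPp.emeasure_eq_measure)
    have "\<forall>\<epsilon>. 0 < \<epsilon> \<longrightarrow> \<epsilon> \<le> 1 \<longrightarrow> c * \<epsilon> \<le> measure PP {x \<in> space PP. \<bar>Zf n x\<bar> < \<epsilon>}"
    proof (intro allI impI)
      fix \<epsilon> :: real assume e: "0 < \<epsilon>" "\<epsilon> \<le> 1"
      have sub: "B0 \<subseteq> {x \<in> space PP. \<bar>Zf n x\<bar> < \<epsilon>}"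
      proof
        fix x assume x: "x \<in> B0"
        then have "Zf n x = 0" unfolding Zf_def B0_def mjk_def using det_zero[OF n] by auto
        then show "x \<in> {x \<in> space PP. \<bar>Zf n x\<bar> < \<epsilon>}" using x e unfolding B0_def by auto
      qed
      have "c * \<epsilon> \<le> c" using c0 e by simp
      also have "c \<le> measure PP {x \<in> space PP. \<bar>Zf n x\<bar> < \<epsilon>}"
        unfolding c_def by (rule PPp.finite_measure_mono[OF sub Qm])
      finally show "c * \<epsilon> \<le> measure PP {x \<in> space PP. \<bar>Zf n x\<bar> < \<epsilon>}" .
    qed
    then show ?thesis using c0 by blast
  next
    case False
    then obtain t where t: "0 < emeasure PP (B t)" using pos by auto
    obtain j k i where tjk: "t = (j,k,i)" by (cases t) auto
    define \<eta> where "\<eta> = 1 / real (Suc i)"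
    define R where "R = real (Suc i)"
    have eta: "0 < \<eta>" and R0: "0 < R" unfolding \<eta>_def R_def by auto
    have jk: "j < n" "k < n"
    proof -
      have "B t \<noteq> {}" using t by auto
      then obtain x where "x \<in> B t" by auto
      then show "j < n" "k < n" unfolding B_def tjk by auto
    qed
    have Bt: "B t = {x \<in> space PP. good n j k \<eta> R (x 0) x}"
      unfolding B_def tjk \<eta>_def R_def using jk by auto
    define P0 where "P0 = measure PP (B t)"
    have P0: "0 < P0" using t by (simp add: PPp.emeasure_eq_measure P0_def)
    define C where "C = 8 * R / \<eta> + 2"
    have C0: "0 < C" unfolding C_def using eta R0 by (simp add: field_simps)
    define c where "c = P0\<^sup>2 / C"
    have c0: "0 < c" unfolding c_def using P0 C0 by simp
    have "\<forall>\<epsilon>. 0 < \<epsilon> \<longrightarrow> \<epsilon> \<le> 1 \<longrightarrow> c * \<epsilon> \<le> measure PP {x \<in> space PP. \<bar>Zf n x\<bar> < \<epsilon>}"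
    proof (intro allI impI)
      fix \<epsilon> :: real assume e: "0 < \<epsilon>" "\<epsilon> \<le> 1"
      define \<delta> where "\<delta> = \<epsilon> * \<eta> / (2 * R)"
      have d: "0 < \<delta>" unfolding \<delta>_def using e eta R0 by simp
      define \<phi> where "\<phi> = phi n j k \<eta> R \<delta>"
      define L where "L = real ` {..<nbins \<delta>}"
      define J where "J = {1..<n-1}"
      have idx: "{..<n} = insert 0 (insert (n-1) J)" using n by (auto simp: J_def)
      have PPJ: "PP = PiM (insert 0 (insert (n-1) J)) (\<lambda>_. \<mu>)" unfolding PP_def idx ..
      have L: "finite L" unfolding L_def by simp
      have cardL: "card L = nbins \<delta>" unfolding L_def by (simp add: card_image inj_on_def)
      have Lnn: "\<And>y. y \<in> L \<Longrightarrow> 0 \<le> y" unfolding L_def by auto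
      have cl: "(emeasure PP {x \<in> space PP. \<phi> (x 0) x \<in> L})\<^sup>2
          \<le> of_nat (card L) * emeasure PP {x \<in> space PP. \<phi> (x 0) x \<in> L \<and> \<phi> (x (n-1)) x = \<phi> (x 0) x}"
        unfolding PPJ
      proof (rule cells[OF P])
        show "finite J" "0 \<notin> J" "n - 1 \<notin> J" "n - 1 \<noteq> 0" unfolding J_def using n by auto
        show "(\<lambda>(z, u). \<phi> u z) \<in> borel_measurable (PiM J (\<lambda>_. \<mu>) \<Otimes>\<^sub>M \<mu>)"
          unfolding \<phi>_def J_def by (rule phim[OF N])
        show "\<phi> a x = \<phi> a y" if "\<And>i. i \<in> J \<Longrightarrow> x i = y i" for a x y
          unfolding \<phi>_def by (rule phi_dep) (use that J_def in auto)
        show "finite L" by (rule L)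
      qed
      have goodL: "\<phi> a x \<in> L \<longleftrightarrow> good n j k \<eta> R a x" for a x
      proof
        assume "\<phi> a x \<in> L"
        then show "good n j k \<eta> R a x" using Lnn[of "-1"] unfolding \<phi>_def phi_def by (auto split: if_splits)
      next
        assume "good n j k \<eta> R a x"
        then show "\<phi> a x \<in> L" unfolding \<phi>_def phi_def L_def using binr_range[OF d] by simp
      qed
      have A0: "{x \<in> space PP. \<phi> (x 0) x \<in> L} = B t" unfolding Bt goodL ..
      have A1: "{x \<in> space PP. \<phi> (x 0) x \<in> L \<and> \<phi> (x (n-1)) x = \<phi> (x 0) x} \<subseteq> {x \<in> space PP. \<bar>Zf n x\<bar> < \<epsilon>}"
      proof
        fix x assume x: "x \<in> {x \<in> space PP. \<phi> (x 0) x \<in> L \<and> \<phi> (x (n-1)) x = \<phi> (x 0) x}"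
        then have m0: "\<phi> (x 0) x \<in> L" and eqb: "\<phi> (x (n-1)) x = \<phi> (x 0) x" by auto
        then have m1: "\<phi> (x (n-1)) x \<in> L" by simp
        have g0: "good n j k \<eta> R (x 0) x" using m0 goodL by blast
        have g1: "good n j k \<eta> R (x (n-1)) x" using m1 goodL by blast
        have bin: "binr \<delta> (zz n j (x 0) x) (zz n k (x 0) x) = binr \<delta> (zz n j (x (n-1)) x) (zz n k (x (n-1)) x)"
          using eqb g0 g1 unfolding \<phi>_def phi_def by simp
        have "\<bar>Zf n x\<bar> \<le> R * \<delta> / \<eta>"
          unfolding Zf_def
        proof (rule det_key[OF n jk])
          show "\<eta> \<le> \<bar>Dt n (rw (\<lambda>i. x (i-1)) (unitv j) (unitv k))\<bar>" using g0 unfolding good_def mjk_def by simp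
          show "0 < \<eta>" "0 < \<delta>" "0 \<le> R" using eta d R0 by auto
          show "\<bar>Dt n (rw (\<lambda>i. x (i-1)) (unitv j) (x (n-1)))\<bar> \<le> R"
               "\<bar>Dt n (rw (\<lambda>i. x (i-1)) (unitv k) (x (n-1)))\<bar> \<le> R"
            using g1 unfolding good_def zz_def by auto
          show "binr \<delta> (Dt n (rw (\<lambda>i. x (i-1)) (unitv j) (x 0))) (Dt n (rw (\<lambda>i. x (i-1)) (unitv k) (x 0)))
            = binr \<delta> (Dt n (rw (\<lambda>i. x (i-1)) (unitv j) (x (n-1)))) (Dt n (rw (\<lambda>i. x (i-1)) (unitv k) (x (n-1))))"
            using bin unfolding zz_def .
        qed
        also have "R * \<delta> / \<eta> = \<epsilon> / 2" unfolding \<delta>_def using eta R0 by (simp add: field_simps)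
        also have "\<dots> < \<epsilon>" using e by simp
        finally show "x \<in> {x \<in> space PP. \<bar>Zf n x\<bar> < \<epsilon>}" using x by auto
      qed
      define Q where "Q = measure PP {x \<in> space PP. \<bar>Zf n x\<bar> < \<epsilon>}"
      define A1s where "A1s = {x \<in> space PP. \<phi> (x 0) x \<in> L \<and> \<phi> (x (n-1)) x = \<phi> (x 0) x}"
      have "P0\<^sup>2 \<le> real (card L) * measure PP A1s"
        by (rule ennreal_sq_le) (use cl in \<open>simp_all add: A0 A1s_def P0_def PPp.emeasure_eq_measure\<close>)
      also have "\<dots> \<le> real (card L) * Q"
        unfolding Q_def A1s_def by (intro mult_left_mono PPp.finite_measure_mono[OF A1 Qm]) simp
      also have "\<dots> \<le> (4 / \<delta> + 2) * Q"
        unfolding cardL by (rule mult_right_mono[OF nbins_bound[OF d]]) (simp add: Q_def)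
      also have "4 / \<delta> + 2 = (8 * R / \<eta>) / \<epsilon> + 2"
        unfolding \<delta>_def using e eta R0 by (simp add: field_simps)
      also have "\<dots> \<le> C / \<epsilon>"
      proof -
        have "2 \<le> 2 / \<epsilon>" using e by (simp add: field_simps)
        then show ?thesis unfolding C_def by (simp add: add_divide_distrib)
      qed
      finally have "P0\<^sup>2 \<le> C / \<epsilon> * Q" by (simp add: Q_def mult_right_mono)
      then show "c * \<epsilon> \<le> Q" unfolding c_def using e C0 by (simp add: field_simps)
    qed
    then show ?thesis using c0 by blast
  qed
qed

lemma gc_cong:
  assumes "\<And>i. i < n \<Longrightarrow> x i = y i"
  shows "gen_cross n x = gen_cross n y"
  unfolding gen_cross_def
  by (intro ext if_cong refl sum.cong arg_cong2[where f="(*)"] prod.cong) (auto simp: assms)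

lemma dyadic_all:
  fixes z :: real
  assumes "z < (1/2)^K"
  shows "(\<Sum>k<K. if z < (1/2)^k then (2::real)^k else 0) = 2^K - 1"
proof -
  have "(\<Sum>k<K. if z < (1/2)^k then (2::real)^k else 0) = (\<Sum>k<K. (2::real)^k)"
  proof (rule sum.cong[OF refl])
    fix k assume "k \<in> {..<K}"
    then have h: "(1/2::real)^K \<le> (1/2)^k" by (intro power_decreasing) auto
    have "z < (1/2)^k" using h assms by linarith
    then show "(if z < (1/2)^k then (2::real)^k else 0) = 2^k" by simp
  qed
  also have "\<dots> = 2^K - 1" by (induction K) auto
  finally show ?thesis .
qed

lemma dyadic:
  fixes z :: real
  assumes z: "0 < z"
  shows "(\<Sum>k<K. if z < (1/2)^k then (2::real)^k else 0) \<le> 2 / z"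
proof (induction K)
  case 0
  then show ?case using z by simp
next
  case (Suc K)
  show ?case
  proof (cases "z < (1/2)^K")
    case True
    have "(\<Sum>k<Suc K. if z < (1/2)^k then (2::real)^k else 0) = 2^K - 1 + 2^K"
      using dyadic_all[OF True] True by simp
    also have "\<dots> \<le> 2 * 2^K" by simp
    also have "\<dots> \<le> 2 / z"
    proof -
      have "z * 2^K < (1/2)^K * 2^K" using True by (intro mult_strict_right_mono) auto
      also have "\<dots> = 1" by (simp add: power_mult_distrib[symmetric])
      finally have "2^K * z \<le> 1" by (simp add: mult.commute)
      then show ?thesis using z by (simp add: field_simps)
    qed
    finally show ?thesis .
  next
    case False
    then show ?thesis using Suc by simp
  qed
qed

lemma dyadic_enn:
  fixes z :: real
  assumes z: "0 \<le> z"
  shows "(\<Sum>k<K. (2::ennreal)^k * indicator {w::real. w < (1/2)^k} z) \<le> 2 * inverse (ennreal z)"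
proof (cases "z = 0")
  case True
  then show ?thesis by simp
next
  case False
  then have z0: "0 < z" using z by simp
  have "(\<Sum>k<K. (2::ennreal)^k * indicator {w::real. w < (1/2)^k} z) =
        (\<Sum>k<K. ennreal (if z < (1/2)^k then (2::real)^k else 0))"
    by (rule sum.cong) (auto simp: indicator_def ennreal_power[symmetric])
  also have "\<dots> = ennreal (\<Sum>k<K. if z < (1/2)^k then (2::real)^k else 0)"
    by (rule sum_ennreal) auto
  also have "\<dots> \<le> ennreal (2 / z)" by (rule ennreal_leI[OF dyadic[OF z0]])
  also have "\<dots> = 2 * inverse (ennreal z)"
  proof -
    have "ennreal (2 / z) = ennreal 2 * ennreal (inverse z)"
      unfolding divide_inverse by (rule ennreal_mult) (use z0 in auto)
    also have "\<dots> = 2 * inverse (ennreal z)" using inverse_ennreal[OF z0] by simp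
    finally show ?thesis .
  qed
  finally show ?thesis .
qed

theorem mainTheorem3:
  fixes M :: "'a measure" and n :: nat and X :: "nat \<Rightarrow> 'a \<Rightarrow> (nat \<Rightarrow> real)"
  assumes "prob_space M"
    and "n \<ge> 2"
    and rv: "\<And>i. i < n \<Longrightarrow> X i \<in> measurable M (PiM {..<n} (\<lambda>_. borel))"
    and indep: "prob_space.indep_vars M (\<lambda>_. PiM {..<n} (\<lambda>_. borel)) X {..<n}"
    and ident: "\<And>i. i < n \<Longrightarrow>
        distr M (PiM {..<n} (\<lambda>_. borel)) (X i) = distr M (PiM {..<n} (\<lambda>_. borel)) (X 0)"
    and linind: "AE \<omega> in M. lin_indep_vecs n (n - 1) (\<lambda>i. X i \<omega>)"
  defines "Y \<equiv> (\<lambda>\<omega> j. gen_cross n (\<lambda>i. X i \<omega>) j / supnorm n (gen_cross n (\<lambda>i. X i \<omega>)))"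
  shows "Liminf (at_right 0)
           (\<lambda>\<epsilon>::real. ereal (measure M {\<omega> \<in> space M. \<bar>vdot n (X (n - 1) \<omega>) (Y \<omega>)\<bar> < \<epsilon>} / \<epsilon>)) > 0 \<and>
         (\<integral>\<^sup>+ \<omega>. inverse (ennreal \<bar>vdot n (X (n - 1) \<omega>) (Y \<omega>)\<bar>) \<partial>M) = \<infinity>"
proof -
  interpret prob_space M by fact
  have n: "2 \<le> n" by fact
  define S where "S = SS n"
  have S_eq: "PiM {..<n} (\<lambda>_. borel) = S" unfolding S_def SS_def ..
  define \<mu> where "\<mu> = distr M S (X 0)"
  have X0: "X 0 \<in> measurable M S" using rv[of 0] n unfolding S_eq by simp
  have P\<mu>: "prob_space \<mu>" unfolding \<mu>_def by (rule prob_space_distr[OF X0])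
  have N\<mu>: "sets \<mu> = sets (SS n)" unfolding \<mu>_def S_def by simp
  define PP where "PP = PiM {..<n} (\<lambda>_. \<mu>)"
  define T where "T = (\<lambda>\<omega>. \<lambda>i\<in>{..<n}. X i \<omega>)"
  have rvS: "\<And>i. i \<in> {..<n} \<Longrightarrow> random_variable S (X i)" using rv unfolding S_eq by auto
  have distrT: "distr M (PiM {..<n} (\<lambda>_. S)) T = PP"
  proof -
    have "indep_vars (\<lambda>_. S) X {..<n}" using indep unfolding S_eq .
    then have "distr M (PiM {..<n} (\<lambda>_. S)) T = PiM {..<n} (\<lambda>i. distr M S (X i))"
    proof -
      have "0 \<in> {..<n}" using n by simp
      then have ne: "{..<n} \<noteq> ({}::nat set)" by blast
      show ?thesis unfolding T_def
        using indep_vars_iff_distr_eq_PiM'[where I="{..<n}" and M'="\<lambda>_. S" and X=X, OF ne] rvS \<open>indep_vars (\<lambda>_. S) X {..<n}\<close>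
        by simp
    qed
    also have "\<dots> = PP" unfolding PP_def \<mu>_def
    proof (rule PiM_cong[OF refl])
      fix i assume "i \<in> {..<n}"
      then have "distr M S (X i) = distr M S (X 0)" using ident[of i] unfolding S_eq by simp
      then show "distr M S (X i) = distr M S (X 0)" .
    qed
    finally show ?thesis .
  qed
  have Tm: "T \<in> measurable M (PiM {..<n} (\<lambda>_. S))"
    unfolding T_def by (rule measurable_restrict) (use rvS in auto)
  have setsPP: "sets PP = sets (PiM {..<n} (\<lambda>_. S))" unfolding PP_def
    by (rule sets_PiM_cong) (auto simp: N\<mu> S_def)
  have spacePP: "space PP = space (PiM {..<n} (\<lambda>_. S))" using setsPP by (rule sets_eq_imp_space_eq)
  define W where "W = (\<lambda>\<omega>. \<bar>vdot n (X (n - 1) \<omega>) (Y \<omega>)\<bar>)"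
  have WT: "W \<omega> = \<bar>Zf n (T \<omega>)\<bar>" for \<omega>
  proof -
    have "gen_cross n (\<lambda>i. X i \<omega>) = gen_cross n (T \<omega>)" by (rule gc_cong) (simp add: T_def)
    moreover have "T \<omega> (n-1) = X (n-1) \<omega>" unfolding T_def using n by simp
    ultimately show ?thesis unfolding W_def Zf_def Y_def by simp
  qed
  have Zm: "Zf n \<in> borel_measurable (PiM {..<n} (\<lambda>_. S))" unfolding S_def by (rule Zf_meas[OF refl n])
  have Wm: "W \<in> borel_measurable M"
  proof -
    have "(\<lambda>\<omega>. \<bar>Zf n (T \<omega>)\<bar>) \<in> borel_measurable M" using measurable_compose[OF Tm Zm] by measurable
    moreover have "W = (\<lambda>\<omega>. \<bar>Zf n (T \<omega>)\<bar>)" using WT by (intro ext)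
    ultimately show ?thesis by simp
  qed
  have evt: "measure M {\<omega> \<in> space M. W \<omega> < \<epsilon>} = measure PP {x \<in> space PP. \<bar>Zf n x\<bar> < \<epsilon>}" for \<epsilon>
  proof -
    have Qs: "{x \<in> space PP. \<bar>Zf n x\<bar> < \<epsilon>} \<in> sets (PiM {..<n} (\<lambda>_. S))"
      unfolding spacePP using Zm by measurable
    have "measure PP {x \<in> space PP. \<bar>Zf n x\<bar> < \<epsilon>} = measure M (T -` {x \<in> space PP. \<bar>Zf n x\<bar> < \<epsilon>} \<inter> space M)"
      using measure_distr[OF Tm Qs] distrT by simp
    also have "T -` {x \<in> space PP. \<bar>Zf n x\<bar> < \<epsilon>} \<inter> space M = {\<omega> \<in> space M. W \<omega> < \<epsilon>}"
      using measurable_space[OF Tm] unfolding spacePP WT by auto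
    finally show ?thesis by simp
  qed
  obtain c where c0: "0 < c" and cb: "\<And>\<epsilon>. 0 < \<epsilon> \<Longrightarrow> \<epsilon> \<le> 1 \<Longrightarrow> c * \<epsilon> \<le> measure M {\<omega> \<in> space M. W \<omega> < \<epsilon>}"
    using key_Pi[OF P\<mu> N\<mu> n] unfolding PP_def[symmetric] evt[symmetric] by blast
  have part1: "Liminf (at_right 0) (\<lambda>\<epsilon>::real. ereal (measure M {\<omega> \<in> space M. W \<omega> < \<epsilon>} / \<epsilon>)) > 0"
  proof -
    have "ereal c \<le> Liminf (at_right 0) (\<lambda>\<epsilon>::real. ereal (measure M {\<omega> \<in> space M. W \<omega> < \<epsilon>} / \<epsilon>))"
    proof (rule le_Liminf_iff[THEN iffD2], intro allI impI)
      fix y assume y: "y < ereal c"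
      have "\<forall>\<^sub>F \<epsilon> in at_right (0::real). \<epsilon> \<in> {0<..<1}"
        by (rule eventually_at_right_real) simp
      then have "\<forall>\<^sub>F \<epsilon> in at_right (0::real). 0 < \<epsilon> \<and> \<epsilon> < 1"
        by (rule eventually_mono) simp
      then show "\<forall>\<^sub>F \<epsilon> in at_right (0::real). y < ereal (measure M {\<omega> \<in> space M. W \<omega> < \<epsilon>} / \<epsilon>)"
      proof (rule eventually_mono)
        fix \<epsilon> :: real assume e: "0 < \<epsilon> \<and> \<epsilon> < 1"
        then have "c \<le> measure M {\<omega> \<in> space M. W \<omega> < \<epsilon>} / \<epsilon>" using cb[of \<epsilon>] by (simp add: field_simps)
        then show "y < ereal (measure M {\<omega> \<in> space M. W \<omega> < \<epsilon>} / \<epsilon>)" using y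
          by (meson ereal_less_eq(3) order_less_le_trans)
      qed
    qed
    then show ?thesis using c0 by (meson ereal_less(2) order_less_le_trans)
  qed
  have part2: "(\<integral>\<^sup>+ \<omega>. inverse (ennreal (W \<omega>)) \<partial>M) = \<infinity>"
  proof -
    define I where "I = (\<integral>\<^sup>+ \<omega>. inverse (ennreal (W \<omega>)) \<partial>M)"
    define E where "E = (\<lambda>k::nat. {\<omega> \<in> space M. W \<omega> < (1/2)^k})"
    have Em: "E k \<in> sets M" for k unfolding E_def using Wm by measurable
    have lowK: "ennreal (c * real K) \<le> 2 * I" for K
    proof -
      have "ennreal (c * real K) = (\<Sum>k<K. ennreal c)"
        using c0 by (simp add: ennreal_of_nat_eq_real_of_nat ennreal_mult' mult.commute)
      also have "\<dots> \<le> (\<Sum>k<K. (2::ennreal)^k * emeasure M (E k))"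
      proof (rule sum_mono)
        fix k assume "k \<in> {..<K}"
        have hk: "0 < (1/2::real)^k" "(1/2::real)^k \<le> 1" by (auto simp: power_le_one)
        have "c * (1/2)^k \<le> measure M (E k)" unfolding E_def using cb[OF hk] .
        then have "ennreal (c * (1/2)^k) \<le> emeasure M (E k)"
          by (simp add: emeasure_eq_measure)
        then have "(2::ennreal)^k * ennreal (c * (1/2)^k) \<le> 2^k * emeasure M (E k)"
          by (rule mult_left_mono) simp
        moreover have "(2::ennreal)^k * ennreal (c * (1/2)^k) = ennreal c"
        proof -
          have "(2::ennreal)^k = ennreal (2^k)" using ennreal_power[of 2 k] by simp
          then have "(2::ennreal)^k * ennreal (c * (1/2)^k) = ennreal (2^k * (c * (1/2)^k))"
            using c0 by (simp add: ennreal_mult)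
          also have "2^k * (c * (1/2)^k) = c" by (simp add: power_one_over field_simps)
          finally show ?thesis .
        qed
        ultimately show "ennreal c \<le> (2::ennreal)^k * emeasure M (E k)" by simp
      qed
      also have "\<dots> = (\<integral>\<^sup>+ \<omega>. (\<Sum>k<K. (2::ennreal)^k * indicator (E k) \<omega>) \<partial>M)"
      proof -
        have "(\<integral>\<^sup>+ \<omega>. (\<Sum>k<K. (2::ennreal)^k * indicator (E k) \<omega>) \<partial>M) = (\<Sum>k<K. \<integral>\<^sup>+ \<omega>. (2::ennreal)^k * indicator (E k) \<omega> \<partial>M)"
          by (rule nn_integral_sum) (use Em in measurable)
        also have "\<dots> = (\<Sum>k<K. (2::ennreal)^k * emeasure M (E k))"
          by (intro sum.cong refl nn_integral_cmult_indicator Em)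
        finally show ?thesis by simp
      qed
      also have "\<dots> \<le> (\<integral>\<^sup>+ \<omega>. 2 * inverse (ennreal (W \<omega>)) \<partial>M)"
      proof (rule nn_integral_mono)
        fix \<omega> assume \<omega>: "\<omega> \<in> space M"
        have "(\<Sum>k<K. (2::ennreal)^k * indicator (E k) \<omega>) = (\<Sum>k<K. (2::ennreal)^k * indicator {w::real. w < (1/2)^k} (W \<omega>))"
          using \<omega> unfolding E_def by (intro sum.cong refl) (simp add: indicator_def)
        also have "\<dots> \<le> 2 * inverse (ennreal (W \<omega>))" by (rule dyadic_enn) (simp add: W_def)
        finally show "(\<Sum>k<K. (2::ennreal)^k * indicator (E k) \<omega>) \<le> 2 * inverse (ennreal (W \<omega>))" .
      qed
      also have "\<dots> = 2 * I" unfolding I_def by (rule nn_integral_cmult) (use Wm in measurable)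
      finally show ?thesis .
    qed
    show ?thesis
    proof (rule ccontr)
      assume "\<not> ?thesis"
      then have "I \<noteq> \<top>" unfolding I_def by simp
      then obtain r where r: "I = ennreal r" "0 \<le> r" by (cases I) auto
      obtain K :: nat where K: "2 * r / c < K" using reals_Archimedean2 by blast
      have "ennreal (c * real K) \<le> ennreal (2 * r)" using lowK[of K] r by (simp add: ennreal_mult)
      then have "c * real K \<le> 2 * r" using r by (simp add: ennreal_le_iff)
      moreover have "2 * r < c * real K" using K c0 by (simp add: field_simps)
      ultimately show False by simp
    qed
  qed
  show ?thesis using part1 part2 unfolding W_def by simp
qed

end
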